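(* Let $h$ be smooth near $(0,0)$ with Taylor expansion $h(x,y)=a^2x^2+b^2y^2+\sum_{m+n\ge3}h_{m,n}x^my^n$, $a,b>0$, and let $z$ be a $C^3$ solution of $z_x^2+z_y^2=h$ near $(0,0)$ with $z(0,0)=0$. If $a\ne b$, then $z(x,y)=\frac12(\pm ax^2\pm by^2)+O((|x|+|y|)^3)$ for some choice of signs. If $a=b$, the same conclusion holds after a change of coordinates $(x,y)\mapsto(x\cos\xi+y\sin\xi,\,-x\sin\xi+y\cos\xi)$ for some angle $\xi$. *)

theory Defs
  imports "HOL-Analysis.Analysis" "HOL-Library.Landau_Symbols"
begin

definition px :: "(real \<times> real \<Rightarrow> real) \<Rightarrow> real \<times> real \<Rightarrow> real" where
  "px f p = deriv (\<lambda>t. f (t, snd p)) (fst p)"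

definition py :: "(real \<times> real \<Rightarrow> real) \<Rightarrow> real \<times> real \<Rightarrow> real" where
  "py f p = deriv (\<lambda>t. f (fst p, t)) (snd p)"

fun Ck_on :: "nat \<Rightarrow> (real \<times> real \<Rightarrow> real) \<Rightarrow> (real \<times> real) set \<Rightarrow> bool" where
  "Ck_on 0 f U = continuous_on U f"
| "Ck_on (Suc k) f U =
     (continuous_on U f \<and>
      (\<forall>p\<in>U. (\<lambda>t. f (t, snd p)) differentiable (at (fst p)) \<and>
              (\<lambda>t. f (fst p, t)) differentiable (at (snd p))) \<and>
      Ck_on k (px f) U \<and> Ck_on k (py f) U)"

definition smooth_on :: "(real \<times> real \<Rightarrow> real) \<Rightarrow> (real \<times> real) set \<Rightarrow> bool" where
  "smooth_on f U \<longleftrightarrow> (\<forall>k. Ck_on k f U)"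

end

theory Submission
  imports Defs
begin

lemma Ck_cont: "Ck_on k f U \<Longrightarrow> continuous_on U f"
  by (cases k) auto

lemma Ck_dx: assumes "Ck_on (Suc k) f U" "(x,y) \<in> U"
  shows "((\<lambda>t. f (t,y)) has_real_derivative px f (x,y)) (at x)"
proof -
  have "(\<lambda>t. f (t,y)) differentiable (at x)" using assms by fastforce
  then show ?thesis unfolding px_def using DERIV_deriv_iff_real_differentiable by force
qed

lemma Ck_dy: assumes "Ck_on (Suc k) f U" "(x,y) \<in> U"
  shows "((\<lambda>t. f (x,t)) has_real_derivative py f (x,y)) (at y)"
proof -
  have "(\<lambda>t. f (x,t)) differentiable (at y)" using assms by fastforce
  then show ?thesis unfolding py_def using DERIV_deriv_iff_real_differentiable by force
qed

lemma Ck_px: "Ck_on (Suc k) f U \<Longrightarrow> Ck_on k (px f) U" by simp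
lemma Ck_py: "Ck_on (Suc k) f U \<Longrightarrow> Ck_on k (py f) U" by simp

lemma taylor_gen:
  fixes r M x :: real
  assumes "n > 0" "diff 0 = g"
    and D: "\<And>m t. m < n \<Longrightarrow> -r \<le> t \<Longrightarrow> t \<le> r \<Longrightarrow> (diff m has_real_derivative diff (Suc m) t) (at t)"
    and B: "\<And>t. -r \<le> t \<Longrightarrow> t \<le> r \<Longrightarrow> \<bar>diff n t\<bar> \<le> M"
    and x: "\<bar>x\<bar> \<le> r"
  shows "\<bar>g x - (\<Sum>m<n. (diff m 0 / fact m) * x^m)\<bar> \<le> M / fact n * \<bar>x\<bar>^n"
proof (cases "x = 0")
  case True
  then show ?thesis using assms(1,2) by (simp add: zero_power)
next
  case False
  have "0 \<le> r" using x by auto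
  have "\<exists>t. (if x < 0 then x < t \<and> t < 0 else 0 < t \<and> t < x) \<and>
    g x = (\<Sum>m<n. (diff m 0 / fact m) * (x - 0)^m) + (diff n t / fact n) * (x - 0)^n"
    by (rule Taylor[where a="-r" and b=r and diff=diff]) (use assms False `0 \<le> r` in auto)
  then obtain t where t: "(if x < 0 then x < t \<and> t < 0 else 0 < t \<and> t < x)"
    "g x = (\<Sum>m<n. (diff m 0 / fact m) * (x - 0)^m) + (diff n t / fact n) * (x - 0)^n"
    by fastforce
  have "-r \<le> t" "t \<le> r" using t(1) x by (auto split: if_splits)
  then have "\<bar>diff n t\<bar> \<le> M" by (rule B)
  have "\<bar>g x - (\<Sum>m<n. (diff m 0 / fact m) * x^m)\<bar> = \<bar>diff n t\<bar> / fact n * \<bar>x\<bar>^n"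
    using t(2) by (simp add: abs_mult power_abs)
  also have "\<dots> \<le> M / fact n * \<bar>x\<bar>^n"
    using `\<bar>diff n t\<bar> \<le> M` by (intro mult_right_mono divide_right_mono) auto
  finally show ?thesis .
qed

lemma taylor1:
  fixes r M x :: real
  assumes D: "\<And>t. -r \<le> t \<Longrightarrow> t \<le> r \<Longrightarrow> (g has_real_derivative ga t) (at t)"
    and B: "\<And>t. -r \<le> t \<Longrightarrow> t \<le> r \<Longrightarrow> \<bar>ga t\<bar> \<le> M"
    and x: "\<bar>x\<bar> \<le> r"
  shows "\<bar>g x - g 0\<bar> \<le> M * \<bar>x\<bar>"
proof -
  have "\<bar>g x - (\<Sum>m<1. ((\<lambda>m. if m = 0 then g else ga) m 0 / fact m) * x^m)\<bar> \<le> M / fact 1 * \<bar>x\<bar>^1"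
    by (rule taylor_gen[where diff="\<lambda>m. if m = 0 then g else ga"]) (use D B x in auto)
  then show ?thesis by simp
qed

lemma taylor2:
  fixes r M x :: real
  assumes D: "\<And>t. -r \<le> t \<Longrightarrow> t \<le> r \<Longrightarrow> (g has_real_derivative ga t) (at t)"
    "\<And>t. -r \<le> t \<Longrightarrow> t \<le> r \<Longrightarrow> (ga has_real_derivative gb t) (at t)"
    and B: "\<And>t. -r \<le> t \<Longrightarrow> t \<le> r \<Longrightarrow> \<bar>gb t\<bar> \<le> M"
    and x: "\<bar>x\<bar> \<le> r"
  shows "\<bar>g x - g 0 - ga 0 * x\<bar> \<le> M / 2 * x^2"
proof -
  let ?d = "\<lambda>m::nat. if m = 0 then g else if m = 1 then ga else gb"
  have "\<bar>g x - (\<Sum>m<2. (?d m 0 / fact m) * x^m)\<bar> \<le> M / fact 2 * \<bar>x\<bar>^2"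
    by (rule taylor_gen[where diff="?d"]) (use D B x in \<open>auto simp: less_2_cases_iff\<close>)
  then show ?thesis by (simp add: numeral_2_eq_2 power2_abs algebra_simps)
qed

lemma taylor3:
  fixes r M x :: real
  assumes D: "\<And>t. -r \<le> t \<Longrightarrow> t \<le> r \<Longrightarrow> (g has_real_derivative ga t) (at t)"
    "\<And>t. -r \<le> t \<Longrightarrow> t \<le> r \<Longrightarrow> (ga has_real_derivative gb t) (at t)"
    "\<And>t. -r \<le> t \<Longrightarrow> t \<le> r \<Longrightarrow> (gb has_real_derivative gc t) (at t)"
    and B: "\<And>t. -r \<le> t \<Longrightarrow> t \<le> r \<Longrightarrow> \<bar>gc t\<bar> \<le> M"
    and x: "\<bar>x\<bar> \<le> r"
  shows "\<bar>g x - g 0 - ga 0 * x - gb 0 / 2 * x^2\<bar> \<le> M / 6 * \<bar>x\<bar>^3"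
proof -
  let ?d = "\<lambda>m::nat. if m = 0 then g else if m = 1 then ga else if m = 2 then gb else gc"
  have *: "m < 3 \<Longrightarrow> m = 0 \<or> m = 1 \<or> m = 2" for m :: nat by auto
  have "\<bar>g x - (\<Sum>m<3. (?d m 0 / fact m) * x^m)\<bar> \<le> M / fact 3 * \<bar>x\<bar>^3"
    by (rule taylor_gen[where diff="?d"]) (use D B x * in \<open>auto\<close>)
  moreover have "(\<Sum>m<3. (?d m 0 / fact m) * x^m) = g 0 + ga 0 * x + gb 0 / 2 * x^2"
    by (simp add: numeral_3_eq_3 numeral_2_eq_2 fact_numeral)
  moreover have "fact 3 = (6::real)" by (simp add: fact_numeral)
  ultimately show ?thesis by (simp add: algebra_simps)
qed

definition EE :: "nat \<Rightarrow> (real \<times> real \<Rightarrow> real) \<Rightarrow> bool" where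
  "EE k f \<longleftrightarrow> (\<exists>d>0. \<exists>K. \<forall>x y. \<bar>x\<bar> < d \<longrightarrow> \<bar>y\<bar> < d \<longrightarrow> \<bar>f (x,y)\<bar> \<le> K * (\<bar>x\<bar>+\<bar>y\<bar>)^k)"

lemma EE_I: "d > 0 \<Longrightarrow> (\<And>x y. \<bar>x\<bar> < d \<Longrightarrow> \<bar>y\<bar> < d \<Longrightarrow> \<bar>f (x,y)\<bar> \<le> K * (\<bar>x\<bar>+\<bar>y\<bar>)^k) \<Longrightarrow> EE k f"
  unfolding EE_def by blast

lemma EE_E: assumes "EE k f"
  obtains d K where "d > 0" "K \<ge> 0" "\<And>x y. \<bar>x\<bar> < d \<Longrightarrow> \<bar>y\<bar> < d \<Longrightarrow> \<bar>f (x,y)\<bar> \<le> K * (\<bar>x\<bar>+\<bar>y\<bar>)^k"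
proof -
  from assms obtain d K where d: "d > 0" and K: "\<And>x y. \<bar>x\<bar> < d \<Longrightarrow> \<bar>y\<bar> < d \<Longrightarrow> \<bar>f (x,y)\<bar> \<le> K * (\<bar>x\<bar>+\<bar>y\<bar>)^k"
    unfolding EE_def by blast
  have "\<bar>f (x,y)\<bar> \<le> \<bar>K\<bar> * (\<bar>x\<bar>+\<bar>y\<bar>)^k" if "\<bar>x\<bar> < d" "\<bar>y\<bar> < d" for x y
    using K[OF that] by (smt (verit) mult_right_mono zero_le_power abs_ge_zero)
  then show ?thesis using that d by (meson abs_ge_zero)
qed

lemma EE_cong: "EE k f \<Longrightarrow> (\<And>p. f p = g p) \<Longrightarrow> EE k g"
  unfolding EE_def by simp

lemma EE_add: assumes "EE k f" "EE k g" shows "EE k (\<lambda>p. f p + g p)"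
proof -
  obtain d1 K1 where 1: "d1 > 0" "\<And>x y. \<bar>x\<bar> < d1 \<Longrightarrow> \<bar>y\<bar> < d1 \<Longrightarrow> \<bar>f (x,y)\<bar> \<le> K1 * (\<bar>x\<bar>+\<bar>y\<bar>)^k"
    using assms(1) by (elim EE_E) blast
  obtain d2 K2 where 2: "d2 > 0" "\<And>x y. \<bar>x\<bar> < d2 \<Longrightarrow> \<bar>y\<bar> < d2 \<Longrightarrow> \<bar>g (x,y)\<bar> \<le> K2 * (\<bar>x\<bar>+\<bar>y\<bar>)^k"
    using assms(2) by (elim EE_E) blast
  show ?thesis
  proof (rule EE_I[where d="min d1 d2" and K="K1+K2"])
    fix x y :: real assume "\<bar>x\<bar> < min d1 d2" "\<bar>y\<bar> < min d1 d2"
    then have "\<bar>f (x,y)\<bar> \<le> K1 * (\<bar>x\<bar>+\<bar>y\<bar>)^k" "\<bar>g (x,y)\<bar> \<le> K2 * (\<bar>x\<bar>+\<bar>y\<bar>)^k"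
      using 1 2 by auto
    moreover have "\<bar>f (x,y) + g (x,y)\<bar> \<le> \<bar>f (x,y)\<bar> + \<bar>g (x,y)\<bar>" by (rule abs_triangle_ineq)
    ultimately show "\<bar>f (x,y) + g (x,y)\<bar> \<le> (K1+K2) * (\<bar>x\<bar>+\<bar>y\<bar>)^k" unfolding distrib_right by linarith
  qed (use 1 2 in auto)
qed

lemma EE_cmult: assumes "EE k f" shows "EE k (\<lambda>p. c * f p)"
proof -
  obtain d K where 1: "d > 0" "\<And>x y. \<bar>x\<bar> < d \<Longrightarrow> \<bar>y\<bar> < d \<Longrightarrow> \<bar>f (x,y)\<bar> \<le> K * (\<bar>x\<bar>+\<bar>y\<bar>)^k"
    using assms(1) by (elim EE_E) blast
  show ?thesis
  proof (rule EE_I[where d="d" and K="\<bar>c\<bar>*K"])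
    fix x y :: real assume "\<bar>x\<bar> < d" "\<bar>y\<bar> < d"
    then have "\<bar>f (x,y)\<bar> \<le> K * (\<bar>x\<bar>+\<bar>y\<bar>)^k" using 1 by auto
    then show "\<bar>c * f (x,y)\<bar> \<le> (\<bar>c\<bar>*K) * (\<bar>x\<bar>+\<bar>y\<bar>)^k"
      by (simp add: abs_mult mult.assoc mult_left_mono)
  qed (use 1 in auto)
qed

lemma EE_neg: "EE k f \<Longrightarrow> EE k (\<lambda>p. - f p)"
  using EE_cmult[of k f "-1"] by simp

lemma EE_diff: "EE k f \<Longrightarrow> EE k g \<Longrightarrow> EE k (\<lambda>p. f p - g p)"
  using EE_add[of k f "\<lambda>p. - g p"] EE_neg[of k g] by simp

lemma EE_mult: assumes "EE j f" "EE k g" shows "EE (j+k) (\<lambda>p. f p * g p)"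
proof -
  obtain d1 K1 where 1: "d1 > 0" "\<And>x y. \<bar>x\<bar> < d1 \<Longrightarrow> \<bar>y\<bar> < d1 \<Longrightarrow> \<bar>f (x,y)\<bar> \<le> K1 * (\<bar>x\<bar>+\<bar>y\<bar>)^j"
    using assms(1) by (elim EE_E) blast
  obtain d2 K2 where 2: "d2 > 0" "\<And>x y. \<bar>x\<bar> < d2 \<Longrightarrow> \<bar>y\<bar> < d2 \<Longrightarrow> \<bar>g (x,y)\<bar> \<le> K2 * (\<bar>x\<bar>+\<bar>y\<bar>)^k"
    using assms(2) by (elim EE_E) blast
  show ?thesis
  proof (rule EE_I[where d="min d1 d2" and K="K1*K2"])
    fix x y :: real assume "\<bar>x\<bar> < min d1 d2" "\<bar>y\<bar> < min d1 d2"
    then have a: "\<bar>f (x,y)\<bar> \<le> K1 * (\<bar>x\<bar>+\<bar>y\<bar>)^j" and b: "\<bar>g (x,y)\<bar> \<le> K2 * (\<bar>x\<bar>+\<bar>y\<bar>)^k"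
      using 1 2 by auto
    have "\<bar>f (x,y) * g (x,y)\<bar> \<le> (K1 * (\<bar>x\<bar>+\<bar>y\<bar>)^j) * (K2 * (\<bar>x\<bar>+\<bar>y\<bar>)^k)"
      unfolding abs_mult by (rule mult_mono[OF a b]) (use a in auto)
    then show "\<bar>f (x,y) * g (x,y)\<bar> \<le> (K1*K2) * (\<bar>x\<bar>+\<bar>y\<bar>)^(j+k)"
      by (simp add: power_add algebra_simps)
  qed (use 1 2 in auto)
qed

lemma EE_mono: assumes "EE k f" "j \<le> k" shows "EE j f"
proof -
  obtain d K where 1: "d > 0" "K \<ge> 0" "\<And>x y. \<bar>x\<bar> < d \<Longrightarrow> \<bar>y\<bar> < d \<Longrightarrow> \<bar>f (x,y)\<bar> \<le> K * (\<bar>x\<bar>+\<bar>y\<bar>)^k"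
    using assms(1) by (elim EE_E) blast
  show ?thesis
  proof (rule EE_I[where d="min d (1/2)" and K="K"])
    fix x y :: real assume xy: "\<bar>x\<bar> < min d (1/2)" "\<bar>y\<bar> < min d (1/2)"
    then have a: "\<bar>f (x,y)\<bar> \<le> K * (\<bar>x\<bar>+\<bar>y\<bar>)^k" using 1 by auto
    have "(\<bar>x\<bar>+\<bar>y\<bar>)^k \<le> (\<bar>x\<bar>+\<bar>y\<bar>)^j" using xy assms(2)
      by (intro power_decreasing) auto
    then show "\<bar>f (x,y)\<bar> \<le> K * (\<bar>x\<bar>+\<bar>y\<bar>)^j" using a 1(2)
      by (meson mult_left_mono order_trans)
  qed (use 1 in auto)
qed

lemma EE_fst: "EE 1 fst"
  by (rule EE_I[where d=1 and K=1]) auto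

lemma EE_snd: "EE 1 snd"
  by (rule EE_I[where d=1 and K=1]) auto

lemma EE_lin: "EE 1 (\<lambda>p. c1 * fst p + c2 * snd p)"
  by (intro EE_add EE_cmult EE_fst EE_snd)

lemma EE_sw: assumes "EE k f" shows "EE k (\<lambda>p. f (snd p, fst p))"
proof -
  obtain d K where 1: "d > 0" "\<And>x y. \<bar>x\<bar> < d \<Longrightarrow> \<bar>y\<bar> < d \<Longrightarrow> \<bar>f (x,y)\<bar> \<le> K * (\<bar>x\<bar>+\<bar>y\<bar>)^k"
    using assms(1) by (elim EE_E) blast
  show ?thesis
  proof (rule EE_I[where d=d and K=K])
    fix x y :: real assume "\<bar>x\<bar> < d" "\<bar>y\<bar> < d"
    then have "\<bar>f (y,x)\<bar> \<le> K * (\<bar>y\<bar>+\<bar>x\<bar>)^k" using 1(2) by auto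
    then show "\<bar>f (snd (x,y), fst (x,y))\<bar> \<le> K * (\<bar>x\<bar>+\<bar>y\<bar>)^k" by (simp add: add.commute)
  qed (use 1 in auto)
qed

lemma EE_rot: assumes "EE k f" "\<bar>c\<bar> \<le> 1" "\<bar>s\<bar> \<le> 1"
  shows "EE k (\<lambda>p. f (fst p * c + snd p * s, - fst p * s + snd p * c))"
proof -
  obtain d K where 1: "d > 0" "K \<ge> 0" "\<And>x y. \<bar>x\<bar> < d \<Longrightarrow> \<bar>y\<bar> < d \<Longrightarrow> \<bar>f (x,y)\<bar> \<le> K * (\<bar>x\<bar>+\<bar>y\<bar>)^k"
    using assms(1) by (elim EE_E) blast
  show ?thesis
  proof (rule EE_I[where d="d/2" and K="K * 2^k"])
    fix u v :: real assume uv: "\<bar>u\<bar> < d/2" "\<bar>v\<bar> < d/2"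
    have x: "\<bar>u * c + v * s\<bar> \<le> \<bar>u\<bar> + \<bar>v\<bar>"
    proof -
      have "\<bar>u * c\<bar> \<le> \<bar>u\<bar>" "\<bar>v * s\<bar> \<le> \<bar>v\<bar>" using assms(2,3)
        by (auto simp: abs_mult intro: mult_left_le)
      then show ?thesis by linarith
    qed
    have y: "\<bar>- u * s + v * c\<bar> \<le> \<bar>u\<bar> + \<bar>v\<bar>"
    proof -
      have "\<bar>u * s\<bar> \<le> \<bar>u\<bar>" "\<bar>v * c\<bar> \<le> \<bar>v\<bar>" using assms(2,3)
        by (auto simp: abs_mult intro: mult_left_le)
      then show ?thesis by linarith
    qed
    have "\<bar>f (u * c + v * s, - u * s + v * c)\<bar> \<le> K * (\<bar>u * c + v * s\<bar> + \<bar>- u * s + v * c\<bar>)^k"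
      using 1(3) x y uv by auto
    also have "\<dots> \<le> K * (2 * (\<bar>u\<bar> + \<bar>v\<bar>))^k"
      using x y 1(2) by (intro mult_left_mono power_mono) auto
    also have "\<dots> = (K * 2^k) * (\<bar>u\<bar> + \<bar>v\<bar>)^k"
      by (simp only: power_mult_distrib mult.assoc)
    finally show "\<bar>(\<lambda>p. f (fst p * c + snd p * s, - fst p * s + snd p * c)) (u,v)\<bar> \<le> (K * 2^k) * (\<bar>u\<bar> + \<bar>v\<bar>)^k"
      by simp
  qed (use 1 in auto)
qed

lemma small_zero: fixes c K d :: real
  assumes "d > 0" "\<And>t. 0 < t \<Longrightarrow> t < d \<Longrightarrow> \<bar>c\<bar> \<le> K * t" shows "c = 0"
proof (rule ccontr)
  assume "c \<noteq> 0"
  define t where "t = min (d/2) (\<bar>c\<bar> / (2 * (\<bar>K\<bar> + 1)))"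
  have t0: "0 < t" "t < d" using assms(1) `c \<noteq> 0` by (auto simp: t_def)
  have "t \<le> \<bar>c\<bar> / (2 * (\<bar>K\<bar> + 1))" by (simp add: t_def)
  then have "t * (2 * (\<bar>K\<bar> + 1)) \<le> \<bar>c\<bar>" by (simp add: pos_le_divide_eq)
  moreover have "K * t \<le> \<bar>K\<bar> * t" using t0 by (simp add: mult_right_mono)
  moreover have "\<bar>K\<bar> * t < t * (2 * (\<bar>K\<bar> + 1))" using t0
    by (simp add: algebra_simps) (metis abs_ge_zero add_nonneg_pos mult_nonneg_nonneg mult_pos_pos zero_less_numeral order_less_imp_le)
  ultimately have "K * t < \<bar>c\<bar>" by linarith
  with assms(2)[OF t0] show False by linarith
qed

lemma poly_zero:
  assumes "EE 3 (\<lambda>p. al * (fst p)^2 + be * fst p * snd p + ga * (snd p)^2)"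
  shows "al = 0 \<and> be = 0 \<and> ga = 0"
proof -
  obtain d K where 1: "d > 0" "K \<ge> 0" "\<And>x y. \<bar>x\<bar> < d \<Longrightarrow> \<bar>y\<bar> < d \<Longrightarrow>
      \<bar>al * x^2 + be * x * y + ga * y^2\<bar> \<le> K * (\<bar>x\<bar>+\<bar>y\<bar>)^3"
    using assms by (elim EE_E) auto
  have "al = 0"
  proof (rule small_zero[OF 1(1), of _ K])
    fix t :: real assume t: "0 < t" "t < d"
    have "\<bar>al * t^2\<bar> \<le> K * t^3" using 1(3)[of t 0] t by simp
    then have "\<bar>al\<bar> * t^2 \<le> (K * t) * t^2" by (simp add: abs_mult power3_eq_cube power2_eq_square algebra_simps)
    then show "\<bar>al\<bar> \<le> K * t" using t by simp
  qed
  moreover have "ga = 0"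
  proof (rule small_zero[OF 1(1), of _ K])
    fix t :: real assume t: "0 < t" "t < d"
    have "\<bar>ga * t^2\<bar> \<le> K * t^3" using 1(3)[of 0 t] t by simp
    then have "\<bar>ga\<bar> * t^2 \<le> (K * t) * t^2" by (simp add: abs_mult power3_eq_cube power2_eq_square algebra_simps)
    then show "\<bar>ga\<bar> \<le> K * t" using t by simp
  qed
  moreover have "be = 0"
  proof (rule small_zero[OF 1(1), of _ "8*K"])
    fix t :: real assume t: "0 < t" "t < d"
    have "\<bar>be * t * t\<bar> \<le> K * (t+t)^3" using 1(3)[of t t] t `al = 0` `ga = 0` by simp
    then have "\<bar>be\<bar> * t^2 \<le> (8 * K * t) * t^2" by (simp add: abs_mult power3_eq_cube power2_eq_square algebra_simps)
    then show "\<bar>be\<bar> \<le> 8 * K * t" using t by simp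
  qed
  ultimately show ?thesis by simp
qed

lemma cont_bound:
  fixes f :: "'a::topological_space \<Rightarrow> real"
  assumes "continuous_on U f" "S \<subseteq> U" "compact S"
  shows "\<exists>M. \<forall>p\<in>S. \<bar>f p\<bar> \<le> M"
proof -
  have "compact (f ` S)" using assms by (meson compact_continuous_image continuous_on_subset)
  then have "bounded (f ` S)" by (rule compact_imp_bounded)
  then show ?thesis unfolding bounded_real by auto
qed

lemma box_compact: "compact ({-r..r} \<times> {-r..r :: real})"
  by (intro compact_Times compact_Icc)

lemma cont_bound_box:
  fixes f :: "real \<times> real \<Rightarrow> real" and r :: real
  assumes "continuous_on U f" "{-r..r} \<times> {-r..r} \<subseteq> U"
  obtains M where "M \<ge> 0" "\<And>x y. \<bar>x\<bar> \<le> r \<Longrightarrow> \<bar>y\<bar> \<le> r \<Longrightarrow> \<bar>f (x,y)\<bar> \<le> M"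
proof -
  obtain M where M: "\<forall>p\<in>{-r..r} \<times> {-r..r}. \<bar>f p\<bar> \<le> M"
    using cont_bound[OF assms box_compact] by blast
  show ?thesis
  proof (rule that[of "max M 0"])
    fix x y :: real assume "\<bar>x\<bar> \<le> r" "\<bar>y\<bar> \<le> r"
    then have "(x,y) \<in> {-r..r} \<times> {-r..r}" by auto
    then show "\<bar>f (x,y)\<bar> \<le> max M 0" using M by force
  qed simp
qed

lemma dxr: assumes "Ck_on (Suc k) f U" "{-r..r} \<times> {-r..r} \<subseteq> U" "-r \<le> t" "t \<le> r" "\<bar>y\<bar> \<le> r"
  shows "((\<lambda>t. f (t,y)) has_real_derivative px f (t,y)) (at t)"
  using assms(1) by (rule Ck_dx) (use assms(2-5) in \<open>auto simp: abs_le_iff\<close>)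

lemma dyr: assumes "Ck_on (Suc k) f U" "{-r..r} \<times> {-r..r} \<subseteq> U" "-r \<le> t" "t \<le> r" "\<bar>x\<bar> \<le> r"
  shows "((\<lambda>t. f (x,t)) has_real_derivative py f (x,t)) (at t)"
  using assms(1) by (rule Ck_dy) (use assms(2-5) in \<open>auto simp: abs_le_iff\<close>)

lemma exp1:
  assumes C: "Ck_on 2 F U" and r: "r > 0" and S: "{-r..r} \<times> {-r..r} \<subseteq> U"
  shows "EE 2 (\<lambda>p. F p - (F (0,0) + px F (0,0) * fst p + py F (0,0) * snd p))"
proof -
  have C2: "Ck_on (Suc 1) F U" using C by (simp add: numeral_2_eq_2)
  have Cx: "Ck_on (Suc 0) (px F) U" and Cy: "Ck_on (Suc 0) (py F) U" using C2 by auto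
  have in_U: "(x,y) \<in> U" if "\<bar>x\<bar> \<le> r" "\<bar>y\<bar> \<le> r" for x y using subsetD[OF S, of "(x,y)"] that by (auto simp: abs_le_iff)
  obtain M1 where M1: "M1 \<ge> 0" "\<And>x y. \<bar>x\<bar> \<le> r \<Longrightarrow> \<bar>y\<bar> \<le> r \<Longrightarrow> \<bar>px (px F) (x,y)\<bar> \<le> M1"
    using cont_bound_box[OF Ck_cont[OF Ck_px[OF Cx]] S] by blast
  obtain M2 where M2: "M2 \<ge> 0" "\<And>x y. \<bar>x\<bar> \<le> r \<Longrightarrow> \<bar>y\<bar> \<le> r \<Longrightarrow> \<bar>py (py F) (x,y)\<bar> \<le> M2"
    using cont_bound_box[OF Ck_cont[OF Ck_py[OF Cy]] S] by blast
  obtain M3 where M3: "M3 \<ge> 0" "\<And>x y. \<bar>x\<bar> \<le> r \<Longrightarrow> \<bar>y\<bar> \<le> r \<Longrightarrow> \<bar>px (py F) (x,y)\<bar> \<le> M3"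
    using cont_bound_box[OF Ck_cont[OF Ck_px[OF Cy]] S] by blast
  define M where "M = M1 + M2 + M3"
  have M: "M \<ge> 0" "\<And>x y. \<bar>x\<bar> \<le> r \<Longrightarrow> \<bar>y\<bar> \<le> r \<Longrightarrow> \<bar>px (px F) (x,y)\<bar> \<le> M"
    "\<And>x y. \<bar>x\<bar> \<le> r \<Longrightarrow> \<bar>y\<bar> \<le> r \<Longrightarrow> \<bar>py (py F) (x,y)\<bar> \<le> M"
    "\<And>x y. \<bar>x\<bar> \<le> r \<Longrightarrow> \<bar>y\<bar> \<le> r \<Longrightarrow> \<bar>px (py F) (x,y)\<bar> \<le> M"
    using M1 M2 M3 unfolding M_def by (smt (verit) abs_ge_zero)+
  show ?thesis
  proof (rule EE_I[OF r, where K=M])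
    fix x y :: real assume "\<bar>x\<bar> < r" "\<bar>y\<bar> < r"
    then have x: "\<bar>x\<bar> \<le> r" and y: "\<bar>y\<bar> \<le> r" by auto
    have e1: "\<bar>F (x,0) - F (0,0) - px F (0,0) * x\<bar> \<le> M / 2 * x^2"
      by (rule taylor2[where g="\<lambda>t. F (t,0)" and ga="\<lambda>t. px F (t,0)" and gb="\<lambda>t. px (px F) (t,0)" and r=r])
        (use x r in \<open>auto intro: dxr[OF C2 S] dxr[OF Cx S] M(2)\<close>)
    have e2: "\<bar>F (x,y) - F (x,0) - py F (x,0) * y\<bar> \<le> M / 2 * y^2"
      by (rule taylor2[where g="\<lambda>t. F (x,t)" and ga="\<lambda>t. py F (x,t)" and gb="\<lambda>t. py (py F) (x,t)" and r=r])
        (use x y in \<open>auto intro: dyr[OF C2 S] dyr[OF Cy S] M(3)\<close>)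
    have e3: "\<bar>py F (x,0) - py F (0,0)\<bar> \<le> M * \<bar>x\<bar>"
      by (rule taylor1[where g="\<lambda>t. py F (t,0)" and ga="\<lambda>t. px (py F) (t,0)" and r=r])
        (use x r in \<open>auto intro: dxr[OF Cy S] M(4)\<close>)
    have e3': "\<bar>(py F (x,0) - py F (0,0)) * y\<bar> \<le> M * \<bar>x\<bar> * \<bar>y\<bar>"
      unfolding abs_mult using e3 by (simp add: mult_right_mono)
    have eq: "F (x,y) - (F (0,0) + px F (0,0) * x + py F (0,0) * y) =
      (F (x,0) - F (0,0) - px F (0,0) * x) + (F (x,y) - F (x,0) - py F (x,0) * y) + (py F (x,0) - py F (0,0)) * y"
      by (simp add: algebra_simps)
    have sq: "M * (\<bar>x\<bar> + \<bar>y\<bar>)^2 = M * x^2 + M * y^2 + 2 * (M * \<bar>x\<bar> * \<bar>y\<bar>)"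
      by (simp add: power2_sum algebra_simps)
    have pos: "M * x^2 \<ge> 0" "M * y^2 \<ge> 0" "M * \<bar>x\<bar> * \<bar>y\<bar> \<ge> 0" using M(1) by auto
    show "\<bar>F (x,y) - (F (0,0) + px F (0,0) * fst (x,y) + py F (0,0) * snd (x,y))\<bar> \<le> M * (\<bar>x\<bar> + \<bar>y\<bar>)^2"
      using e1 e2 e3' pos unfolding fst_conv snd_conv eq sq by linarith
  qed
qed

lemma exp2:
  assumes C: "Ck_on 3 F U" and r: "r > 0" and S: "{-r..r} \<times> {-r..r} \<subseteq> U"
  shows "EE 3 (\<lambda>p. F p - (F (0,0) + px F (0,0) * fst p + py F (0,0) * snd p
     + px (px F) (0,0) / 2 * (fst p)^2 + px (py F) (0,0) * fst p * snd p + py (py F) (0,0) / 2 * (snd p)^2))"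
proof -
  have C3: "Ck_on (Suc 2) F U" using C by (simp add: numeral_3_eq_3)
  have Cx: "Ck_on (Suc 1) (px F) U" and Cy: "Ck_on (Suc 1) (py F) U" using C3 by (auto simp: numeral_2_eq_2)
  have Cxx: "Ck_on (Suc 0) (px (px F)) U" using Cx by auto
  have Cyy: "Ck_on (Suc 0) (py (py F)) U" using Cy by auto
  have Cxy: "Ck_on (Suc 0) (px (py F)) U" using Cy by auto
  have in_U: "(x,y) \<in> U" if "\<bar>x\<bar> \<le> r" "\<bar>y\<bar> \<le> r" for x y using subsetD[OF S, of "(x,y)"] that by (auto simp: abs_le_iff)
  obtain M1 where M1: "M1 \<ge> 0" "\<And>x y. \<bar>x\<bar> \<le> r \<Longrightarrow> \<bar>y\<bar> \<le> r \<Longrightarrow> \<bar>px (px (px F)) (x,y)\<bar> \<le> M1"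
    using cont_bound_box[OF Ck_cont[OF Ck_px[OF Cxx]] S] by blast
  obtain M2 where M2: "M2 \<ge> 0" "\<And>x y. \<bar>x\<bar> \<le> r \<Longrightarrow> \<bar>y\<bar> \<le> r \<Longrightarrow> \<bar>py (py (py F)) (x,y)\<bar> \<le> M2"
    using cont_bound_box[OF Ck_cont[OF Ck_py[OF Cyy]] S] by blast
  obtain M3 where M3: "M3 \<ge> 0" "\<And>x y. \<bar>x\<bar> \<le> r \<Longrightarrow> \<bar>y\<bar> \<le> r \<Longrightarrow> \<bar>px (px (py F)) (x,y)\<bar> \<le> M3"
    using cont_bound_box[OF Ck_cont[OF Ck_px[OF Cxy]] S] by blast
  obtain M4 where M4: "M4 \<ge> 0" "\<And>x y. \<bar>x\<bar> \<le> r \<Longrightarrow> \<bar>y\<bar> \<le> r \<Longrightarrow> \<bar>px (py (py F)) (x,y)\<bar> \<le> M4"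
    using cont_bound_box[OF Ck_cont[OF Ck_px[OF Cyy]] S] by blast
  define M where "M = M1 + M2 + M3 + M4"
  have M0: "M \<ge> 0" using M1 M2 M3 M4 unfolding M_def by linarith
  have Mb: "\<bar>px (px (px F)) (x,y)\<bar> \<le> M" "\<bar>py (py (py F)) (x,y)\<bar> \<le> M"
    "\<bar>px (px (py F)) (x,y)\<bar> \<le> M" "\<bar>px (py (py F)) (x,y)\<bar> \<le> M"
    if "\<bar>x\<bar> \<le> r" "\<bar>y\<bar> \<le> r" for x y
    using M1(2)[OF that] M2(2)[OF that] M3(2)[OF that] M4(2)[OF that] M1(1) M2(1) M3(1) M4(1)
    unfolding M_def by linarith+
  note M = M0 Mb
  show ?thesis
  proof (rule EE_I[OF r, where K=M])
    fix x y :: real assume "\<bar>x\<bar> < r" "\<bar>y\<bar> < r"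
    then have x: "\<bar>x\<bar> \<le> r" and y: "\<bar>y\<bar> \<le> r" by auto
    have e1: "\<bar>F (x,0) - F (0,0) - px F (0,0) * x - px (px F) (0,0) / 2 * x^2\<bar> \<le> M / 6 * \<bar>x\<bar>^3"
      by (rule taylor3[where g="\<lambda>t. F (t,0)" and ga="\<lambda>t. px F (t,0)" and gb="\<lambda>t. px (px F) (t,0)"
            and gc="\<lambda>t. px (px (px F)) (t,0)" and r=r])
        (use x r in \<open>auto intro: dxr[OF C3 S] dxr[OF Cx S] dxr[OF Cxx S] M(2)\<close>)
    have e2: "\<bar>F (x,y) - F (x,0) - py F (x,0) * y - py (py F) (x,0) / 2 * y^2\<bar> \<le> M / 6 * \<bar>y\<bar>^3"
      by (rule taylor3[where g="\<lambda>t. F (x,t)" and ga="\<lambda>t. py F (x,t)" and gb="\<lambda>t. py (py F) (x,t)"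
            and gc="\<lambda>t. py (py (py F)) (x,t)" and r=r])
        (use x y in \<open>auto intro: dyr[OF C3 S] dyr[OF Cy S] dyr[OF Cyy S] M(3)\<close>)
    have e3: "\<bar>py F (x,0) - py F (0,0) - px (py F) (0,0) * x\<bar> \<le> M / 2 * x^2"
      by (rule taylor2[where g="\<lambda>t. py F (t,0)" and ga="\<lambda>t. px (py F) (t,0)" and gb="\<lambda>t. px (px (py F)) (t,0)" and r=r])
        (use x r in \<open>auto intro: dxr[OF Cy S] dxr[OF Cxy S] M(4)\<close>)
    have e4: "\<bar>py (py F) (x,0) - py (py F) (0,0)\<bar> \<le> M * \<bar>x\<bar>"
      by (rule taylor1[where g="\<lambda>t. py (py F) (t,0)" and ga="\<lambda>t. px (py (py F)) (t,0)" and r=r])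
        (use x r in \<open>auto intro: dxr[OF Cyy S] M(5)\<close>)
    have e3': "\<bar>(py F (x,0) - py F (0,0) - px (py F) (0,0) * x) * y\<bar> \<le> M / 2 * x^2 * \<bar>y\<bar>"
      unfolding abs_mult by (rule mult_right_mono[OF e3]) simp
    have e4': "\<bar>(py (py F) (x,0) - py (py F) (0,0)) / 2 * y^2\<bar> \<le> M / 2 * \<bar>x\<bar> * y^2"
    proof -
      have "\<bar>(py (py F) (x,0) - py (py F) (0,0)) / 2 * y^2\<bar> = \<bar>py (py F) (x,0) - py (py F) (0,0)\<bar> * (y^2/2)"
        by (simp add: abs_mult)
      also have "\<dots> \<le> (M * \<bar>x\<bar>) * (y^2/2)" by (rule mult_right_mono[OF e4]) simp
      finally show ?thesis by simp
    qed
    have eq: "F (x,y) - (F (0,0) + px F (0,0) * x + py F (0,0) * y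
     + px (px F) (0,0) / 2 * x^2 + px (py F) (0,0) * x * y + py (py F) (0,0) / 2 * y^2) =
      (F (x,0) - F (0,0) - px F (0,0) * x - px (px F) (0,0) / 2 * x^2)
      + (F (x,y) - F (x,0) - py F (x,0) * y - py (py F) (x,0) / 2 * y^2)
      + (py F (x,0) - py F (0,0) - px (py F) (0,0) * x) * y
      + (py (py F) (x,0) - py (py F) (0,0)) / 2 * y^2"
      by (simp add: field_simps)
    define u where "u = \<bar>x\<bar>"
    define v where "v = \<bar>y\<bar>"
    have uv: "u \<ge> 0" "v \<ge> 0" "x^2 = u^2" "y^2 = v^2" by (auto simp: u_def v_def)
    have cube: "M * (u + v)^3 = M * u^3 + M * v^3 + 3 * (M * u^2 * v) + 3 * (M * u * v^2)"
      by (simp add: power3_eq_cube power2_eq_square algebra_simps)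
    have pos: "M * u^3 \<ge> 0" "M * v^3 \<ge> 0" "M * u^2 * v \<ge> 0" "M * u * v^2 \<ge> 0" using M(1) uv by auto
    show "\<bar>F (x,y) - (F (0,0) + px F (0,0) * fst (x,y) + py F (0,0) * snd (x,y)
     + px (px F) (0,0) / 2 * (fst (x,y))^2 + px (py F) (0,0) * fst (x,y) * snd (x,y) + py (py F) (0,0) / 2 * (snd (x,y))^2)\<bar>
      \<le> M * (\<bar>x\<bar> + \<bar>y\<bar>)^3"
    proof -
      let ?A = "F (x,0) - F (0,0) - px F (0,0) * x - px (px F) (0,0) / 2 * x^2"
      let ?B = "F (x,y) - F (x,0) - py F (x,0) * y - py (py F) (x,0) / 2 * y^2"
      let ?C = "(py F (x,0) - py F (0,0) - px (py F) (0,0) * x) * y"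
      let ?D = "(py (py F) (x,0) - py (py F) (0,0)) / 2 * y^2"
      have tri: "\<bar>?A + ?B + ?C + ?D\<bar> \<le> \<bar>?A\<bar> + \<bar>?B\<bar> + \<bar>?C\<bar> + \<bar>?D\<bar>"
        by (meson abs_triangle_ineq add_mono order_trans order_refl)
      have b: "\<bar>?A\<bar> + \<bar>?B\<bar> + \<bar>?C\<bar> + \<bar>?D\<bar> \<le> M / 6 * u^3 + M / 6 * v^3 + M / 2 * u^2 * v + M / 2 * u * v^2"
        using e1 e2 e3' e4' unfolding u_def[symmetric] v_def[symmetric] uv(3,4) by linarith
      have c: "M / 6 * u^3 + M / 6 * v^3 + M / 2 * u^2 * v + M / 2 * u * v^2 \<le> M * (u + v)^3"
        unfolding cube using pos by linarith
      show ?thesis unfolding fst_conv snd_conv eq u_def[symmetric] v_def[symmetric]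
        using tri b c by linarith
    qed
  qed
qed


lemma px_sw: "px (\<lambda>p. f (snd p, fst p)) = (\<lambda>p. py f (snd p, fst p))"
  by (rule ext) (simp add: px_def py_def)

lemma py_sw: "py (\<lambda>p. f (snd p, fst p)) = (\<lambda>p. px f (snd p, fst p))"
  by (rule ext) (simp add: px_def py_def)

lemma Ck_sw: "Ck_on k f U \<Longrightarrow> Ck_on k (\<lambda>p. f (snd p, fst p)) ((\<lambda>p. (snd p, fst p)) -` U)"
proof (induction k arbitrary: f)
  case 0
  have "continuous_on ((\<lambda>p. (snd p, fst p)) -` U) (\<lambda>p. f (snd p, fst p))"
    by (rule continuous_on_compose2[of U f]) (use 0 in \<open>auto intro!: continuous_intros\<close>)
  then show ?case by simp
next
  case (Suc k)
  have c: "continuous_on ((\<lambda>p. (snd p, fst p)) -` U) (\<lambda>p. f (snd p, fst p))"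
    by (rule continuous_on_compose2[of U f]) (use Suc.prems in \<open>auto intro!: continuous_intros\<close>)
  have d: "\<forall>p\<in>(\<lambda>p. (snd p, fst p)) -` U. (\<lambda>t. f (snd p, t)) differentiable (at (fst p)) \<and>
              (\<lambda>t. f (t, fst p)) differentiable (at (snd p))"
  proof
    fix p assume "p \<in> (\<lambda>p. (snd p, fst p)) -` U"
    then have "(snd p, fst p) \<in> U" by simp
    then show "(\<lambda>t. f (snd p, t)) differentiable (at (fst p)) \<and> (\<lambda>t. f (t, fst p)) differentiable (at (snd p))"
      using Suc.prems by fastforce
  qed
  have "Ck_on k (\<lambda>p. py f (snd p, fst p)) ((\<lambda>p. (snd p, fst p)) -` U)" "Ck_on k (\<lambda>p. px f (snd p, fst p)) ((\<lambda>p. (snd p, fst p)) -` U)"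
    using Suc.IH Suc.prems by auto
  then show ?case using c d by (simp add: px_sw py_sw)
qed

lemma dist00: "dist (x,y) (0::real,0::real) = norm (x,y)"
  by (simp add: dist_norm)

lemma norm_le_sum: "norm (x::real, y::real) \<le> \<bar>x\<bar> + \<bar>y\<bar>"
  using norm_Pair_le[of x y] by simp

lemma EE_bigo:
  fixes f :: "real \<times> real \<Rightarrow> real"
  assumes "EE 3 f"
  shows "f \<in> O[at (0,0)](\<lambda>p. (\<bar>fst p\<bar> + \<bar>snd p\<bar>) ^ 3)"
proof -
  obtain d K where 1: "d > 0" "K \<ge> 0" "\<And>x y. \<bar>x\<bar> < d \<Longrightarrow> \<bar>y\<bar> < d \<Longrightarrow> \<bar>f (x,y)\<bar> \<le> K * (\<bar>x\<bar>+\<bar>y\<bar>)^3"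
    using assms by (elim EE_E) blast
  have "eventually (\<lambda>p. norm (f p) \<le> K * norm ((\<bar>fst p\<bar> + \<bar>snd p\<bar>) ^ 3)) (at (0,0))"
    unfolding eventually_at
  proof (intro exI[of _ d] conjI allI ballI impI)
    fix p :: "real \<times> real" assume "p \<noteq> (0,0) \<and> dist p (0,0) < d"
    obtain x y where p: "p = (x,y)" by (cases p)
    have dp: "norm (x,y) < d" using \<open>p \<noteq> (0,0) \<and> dist p (0,0) < d\<close> unfolding p dist00 by simp
    have "\<bar>x\<bar> < d" "\<bar>y\<bar> < d" using dp norm_fst_le[of x y] norm_snd_le[of y x] by auto
    then show "norm (f p) \<le> K * norm ((\<bar>fst p\<bar> + \<bar>snd p\<bar>) ^ 3)"
      using 1(3) unfolding p by simp
  qed (use 1 in auto)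
  then show ?thesis by (rule bigoI)
qed

lemma bigo_bound:
  fixes f :: "real \<times> real \<Rightarrow> real"
  assumes "f \<in> O[at (0,0)](\<lambda>p. (\<bar>fst p\<bar> + \<bar>snd p\<bar>) ^ 3)"
  obtains c d where "d > 0" "\<And>x y. (x,y) \<noteq> (0,0) \<Longrightarrow> \<bar>x\<bar> < d \<Longrightarrow> \<bar>y\<bar> < d \<Longrightarrow> \<bar>f (x,y)\<bar> \<le> c * (\<bar>x\<bar>+\<bar>y\<bar>)^3"
proof -
  obtain c where c: "c > 0" "eventually (\<lambda>p. norm (f p) \<le> c * norm ((\<bar>fst p\<bar> + \<bar>snd p\<bar>) ^ 3)) (at (0,0))"
    using assms by (elim landau_o.bigE) blast
  then obtain d where d: "d > 0" "\<And>p. p \<noteq> (0,0) \<Longrightarrow> dist p (0,0) < d \<Longrightarrow> norm (f p) \<le> c * norm ((\<bar>fst p\<bar> + \<bar>snd p\<bar>) ^ 3)"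
    unfolding eventually_at by auto
  show ?thesis
  proof (rule that[of "d/2" c])
    fix x y :: real assume xy: "(x,y) \<noteq> (0,0)" "\<bar>x\<bar> < d/2" "\<bar>y\<bar> < d/2"
    have "dist (x,y) (0,0) < d" unfolding dist00 using norm_le_sum[of x y] xy by linarith
    then show "\<bar>f (x,y)\<bar> \<le> c * (\<bar>x\<bar>+\<bar>y\<bar>)^3" using d(2)[OF xy(1)] by simp
  qed (use d in auto)
qed

lemma rot_identity:
  fixes a u v c s :: real
  shows "a * (c^2 - s^2) / 2 * (u * c + v * s)^2 + (- 2 * a * s * c) * (u * c + v * s) * (- u * s + v * c)
     + (- (a * (c^2 - s^2))) / 2 * (- u * s + v * c)^2 = a * (u^2 - v^2) * (c^2 + s^2)^2 / 2"
proof -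
  have "2 * (a * (c^2 - s^2) / 2 * (u * c + v * s)^2 + (- 2 * a * s * c) * (u * c + v * s) * (- u * s + v * c)
     + (- (a * (c^2 - s^2))) / 2 * (- u * s + v * c)^2) = a * (u^2 - v^2) * (c^2 + s^2)^2"
    by (simp add: distrib_left) algebra
  then show ?thesis by simp
qed
lemma EE_mult': "EE j f \<Longrightarrow> EE k g \<Longrightarrow> j + k = m \<Longrightarrow> EE m (\<lambda>p. f p * g p)"
  using EE_mult by blast

lemma CA: fixes A B Cc :: real assumes "A * B + B * Cc = 0" "B \<noteq> 0" shows "Cc = - A"
proof -
  have "B * (A + Cc) = 0" using assms(1) by (simp add: algebra_simps)
  then show ?thesis using assms(2) by simp
qed

theorem proposition4p1:
  fixes h z :: "real \<times> real \<Rightarrow> real" and a b :: real and U :: "(real \<times> real) set"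
  assumes "open U" and "(0, 0) \<in> U"
    and "smooth_on h U"
    and "a > 0" and "b > 0"
    and "(\<lambda>p. h p - (a\<^sup>2 * (fst p)\<^sup>2 + b\<^sup>2 * (snd p)\<^sup>2))
           \<in> O[at (0, 0)](\<lambda>p. (\<bar>fst p\<bar> + \<bar>snd p\<bar>) ^ 3)"
    and "Ck_on 3 z U"
    and "\<forall>p\<in>U. (px z p)\<^sup>2 + (py z p)\<^sup>2 = h p"
    and "z (0, 0) = 0"
  shows "(a \<noteq> b \<longrightarrow>
           (\<exists>s1 s2 :: real. s1 \<in> {-1, 1} \<and> s2 \<in> {-1, 1} \<and>
              (\<lambda>p. z p - (s1 * a * (fst p)\<^sup>2 + s2 * b * (snd p)\<^sup>2) / 2)
                \<in> O[at (0, 0)](\<lambda>p. (\<bar>fst p\<bar> + \<bar>snd p\<bar>) ^ 3)))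
       \<and> (a = b \<longrightarrow>
           (\<exists>\<xi> s1 s2 :: real. s1 \<in> {-1, 1} \<and> s2 \<in> {-1, 1} \<and>
              (\<lambda>p. z (fst p * cos \<xi> + snd p * sin \<xi>, - fst p * sin \<xi> + snd p * cos \<xi>)
                     - (s1 * a * (fst p)\<^sup>2 + s2 * b * (snd p)\<^sup>2) / 2)
                \<in> O[at (0, 0)](\<lambda>p. (\<bar>fst p\<bar> + \<bar>snd p\<bar>) ^ 3)))"
proof -
  note C = assms(7)
  obtain e where e: "e > 0" "ball (0,0) e \<subseteq> U" using assms(1,2) open_contains_ball by blast
  define r where "r = e/3"
  have r: "r > 0" using e by (simp add: r_def)
  have S: "{-r..r} \<times> {-r..r} \<subseteq> U"
  proof
    fix p assume "p \<in> {-r..r} \<times> {-r..r}"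
    then obtain x y where p: "p = (x,y)" "\<bar>x\<bar> \<le> r" "\<bar>y\<bar> \<le> r" by (cases p) auto
    have "norm (x,y) < e" using norm_le_sum[of x y] p r_def e by linarith
    then have "(x,y) \<in> ball (0,0) e" by (metis dist00 dist_commute mem_ball)
    then show "p \<in> U" using e p by auto
  qed
  obtain d c where cd0: "d > 0" "\<And>x y. (x,y) \<noteq> (0,0) \<Longrightarrow> \<bar>x\<bar> < d \<Longrightarrow> \<bar>y\<bar> < d \<Longrightarrow>
     \<bar>(\<lambda>p. h p - (a\<^sup>2 * (fst p)\<^sup>2 + b\<^sup>2 * (snd p)\<^sup>2)) (x,y)\<bar> \<le> c * (\<bar>x\<bar>+\<bar>y\<bar>)^3"
    by (rule bigo_bound[OF assms(6)]) (rule that)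
  have cd: "\<bar>h (x,y) - (a\<^sup>2 * x\<^sup>2 + b\<^sup>2 * y\<^sup>2)\<bar> \<le> c * (\<bar>x\<bar>+\<bar>y\<bar>)^3"
    if "(x,y) \<noteq> (0,0)" "\<bar>x\<bar> < d" "\<bar>y\<bar> < d" for x y
    using cd0(2)[OF that] by simp
  have "Ck_on 0 h U" using assms(3) unfolding smooth_on_def by blast
  then have "continuous_on U h" by simp
  then have hc: "isCont h (0,0)" using continuous_on_eq_continuous_at[OF assms(1)] assms(2) by blast
  have l1: "((\<lambda>t. h (t,0)) \<longlongrightarrow> h (0,0)) (at (0::real))"
    by (rule isCont_tendsto_compose[OF hc]) (intro tendsto_Pair tendsto_ident_at tendsto_const)
  have l2: "((\<lambda>t. h (t,0)) \<longlongrightarrow> 0) (at (0::real))"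
  proof (rule Lim_null_comparison)
    show "eventually (\<lambda>t. norm (h (t,0)) \<le> a\<^sup>2 * t\<^sup>2 + c * \<bar>t\<bar>^3) (at 0)"
      unfolding eventually_at
    proof (intro exI[of _ d] conjI allI ballI impI)
      fix t :: real assume "t \<noteq> 0 \<and> dist t 0 < d"
      then have "(t,0) \<noteq> ((0::real),(0::real))" "\<bar>t\<bar> < d" by auto
      from cd[OF this(1,2)] cd0(1) have "\<bar>h (t,0) - a\<^sup>2 * t\<^sup>2\<bar> \<le> c * \<bar>t\<bar>^3" by simp
      then show "norm (h (t,0)) \<le> a\<^sup>2 * t\<^sup>2 + c * \<bar>t\<bar>^3"
        using mult_nonneg_nonneg[of "a\<^sup>2" "t\<^sup>2", OF zero_le_power2 zero_le_power2] unfolding real_norm_def by (smt (verit))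
    qed (use cd0 in auto)
    have "((\<lambda>t. a\<^sup>2 * t\<^sup>2 + c * \<bar>t\<bar>^3) \<longlongrightarrow> a\<^sup>2 * 0\<^sup>2 + c * \<bar>0\<bar>^3) (at (0::real))"
      by (intro tendsto_intros)
    then show "((\<lambda>t. a\<^sup>2 * t\<^sup>2 + c * \<bar>t\<bar>^3) \<longlongrightarrow> 0) (at (0::real))" by simp
  qed
  have h0: "h (0,0) = 0" using tendsto_unique[OF at_neq_bot l1 l2] .
  have "(px z (0,0))\<^sup>2 + (py z (0,0))\<^sup>2 = 0" using assms(8) assms(2) h0 by auto
  then have grad0: "px z (0,0) = 0" "py z (0,0) = 0" by (simp_all add: sum_power2_eq_zero_iff)
  define A where "A = px (px z) (0,0)"
  define B where "B = px (py z) (0,0)"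
  define B' where "B' = py (px z) (0,0)"
  define Cc where "Cc = py (py z) (0,0)"
  have ez: "EE 3 (\<lambda>p. z p - (A/2 * (fst p)\<^sup>2 + B * fst p * snd p + Cc/2 * (snd p)\<^sup>2))"
    by (rule EE_cong[OF exp2[OF C r S]]) (simp add: grad0 assms(9) A_def B_def Cc_def)
  have Cs: "Ck_on 3 (\<lambda>p. z (snd p, fst p)) ((\<lambda>p. (snd p, fst p)) -` U)" by (rule Ck_sw[OF C])
  have S': "{-r..r} \<times> {-r..r} \<subseteq> (\<lambda>p. (snd p, fst p)) -` U" using S by auto
  have ezs: "EE 3 (\<lambda>p. z (snd p, fst p) - (Cc/2 * (fst p)\<^sup>2 + B' * fst p * snd p + A/2 * (snd p)\<^sup>2))"
    by (rule EE_cong[OF exp2[OF Cs r S']]) (simp add: px_sw py_sw grad0 assms(9) A_def B'_def Cc_def)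
  have ezs2: "EE 3 (\<lambda>p. z p - (Cc/2 * (snd p)\<^sup>2 + B' * snd p * fst p + A/2 * (fst p)\<^sup>2))"
    by (rule EE_cong[OF EE_sw[OF ezs]]) simp
  have "EE 3 (\<lambda>p. 0 * (fst p)\<^sup>2 + (B' - B) * fst p * snd p + 0 * (snd p)\<^sup>2)"
    by (rule EE_cong[OF EE_diff[OF ez ezs2]]) (simp add: algebra_simps)
  from poly_zero[OF this] have BB: "B' = B" by simp
  have C3: "Ck_on (Suc 2) z U" using C by (simp add: numeral_3_eq_3)
  have ex: "EE 2 (\<lambda>p. px z p - (A * fst p + B * snd p))"
    by (rule EE_cong[OF exp1[OF Ck_px[OF C3] r S]]) (simp add: grad0 A_def BB[symmetric] B'_def)
  have ey: "EE 2 (\<lambda>p. py z p - (B * fst p + Cc * snd p))"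
    by (rule EE_cong[OF exp1[OF Ck_py[OF C3] r S]]) (simp add: grad0 B_def Cc_def)
  define G where "G p = (px z p)\<^sup>2 + (py z p)\<^sup>2 - (a\<^sup>2 * (fst p)\<^sup>2 + b\<^sup>2 * (snd p)\<^sup>2)" for p
  have eG: "EE 3 G"
  proof (rule EE_I[where d="min d r" and K=c])
    fix x y :: real assume xy: "\<bar>x\<bar> < min d r" "\<bar>y\<bar> < min d r"
    then have "(x,y) \<in> {-r..r} \<times> {-r..r}" by (auto simp: abs_le_iff)
    then have "(x,y) \<in> U" using S by blast
    then have G: "G (x,y) = h (x,y) - (a\<^sup>2 * x\<^sup>2 + b\<^sup>2 * y\<^sup>2)" using assms(8) by (simp add: G_def)
    show "\<bar>G (x,y)\<bar> \<le> c * (\<bar>x\<bar>+\<bar>y\<bar>)^3"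
    proof (cases "(x,y) = (0,0)")
      case True then show ?thesis using G h0 by simp
    next
      case False then show ?thesis using G cd xy by simp
    qed
  qed (use cd0 r in auto)
  define e1 where "e1 = (\<lambda>p. px z p - (A * fst p + B * snd p))"
  define e2 where "e2 = (\<lambda>p. py z p - (B * fst p + Cc * snd p))"
  have ex2: "EE 2 e1" using ex unfolding e1_def .
  have ey2: "EE 2 e2" using ey unfolding e2_def .
  have t1: "EE 3 (\<lambda>p. (2 * (A * fst p + B * snd p) + e1 p) * e1 p)"
  proof -
    have "EE 1 (\<lambda>p. 2 * (A * fst p + B * snd p) + e1 p)"
      by (rule EE_add[OF EE_cmult[OF EE_lin] EE_mono[OF ex2]]) simp
    then show ?thesis by (rule EE_mult'[OF _ ex2]) simp
  qed
  have t2: "EE 3 (\<lambda>p. (2 * (B * fst p + Cc * snd p) + e2 p) * e2 p)"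
  proof -
    have "EE 1 (\<lambda>p. 2 * (B * fst p + Cc * snd p) + e2 p)"
      by (rule EE_add[OF EE_cmult[OF EE_lin] EE_mono[OF ey2]]) simp
    then show ?thesis by (rule EE_mult'[OF _ ey2]) simp
  qed
  have "EE 3 (\<lambda>p. (A\<^sup>2 + B\<^sup>2 - a\<^sup>2) * (fst p)\<^sup>2 + (2 * (A * B + B * Cc)) * fst p * snd p + (B\<^sup>2 + Cc\<^sup>2 - b\<^sup>2) * (snd p)\<^sup>2)"
    by (rule EE_cong[OF EE_diff[OF EE_diff[OF eG t1] t2]])
      (simp only: G_def e1_def e2_def, algebra)
  from poly_zero[OF this] have co: "A\<^sup>2 + B\<^sup>2 = a\<^sup>2" "A * B + B * Cc = 0" "B\<^sup>2 + Cc\<^sup>2 = b\<^sup>2"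
    by simp_all
  show ?thesis
  proof (intro conjI impI)
    assume "a \<noteq> b"
    have B0: "B = 0"
    proof (rule ccontr)
      assume "B \<noteq> 0"
      then have "Cc = - A" using co(2) CA by blast
      then have "a\<^sup>2 = b\<^sup>2" using co(1,3) by simp
      then have "a = b" using assms(4,5) by (simp add: power2_eq_iff_nonneg)
      with \<open>a \<noteq> b\<close> show False ..
    qed
    have "A\<^sup>2 = a\<^sup>2" "Cc\<^sup>2 = b\<^sup>2" using co B0 by auto
    then have s: "A / a \<in> {-1, 1}" "Cc / b \<in> {-1, 1}" using assms(4,5)
      by (auto simp: power2_eq_iff)
    show "\<exists>s1 s2 :: real. s1 \<in> {-1, 1} \<and> s2 \<in> {-1, 1} \<and>
              (\<lambda>p. z p - (s1 * a * (fst p)\<^sup>2 + s2 * b * (snd p)\<^sup>2) / 2)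
                \<in> O[at (0, 0)](\<lambda>p. (\<bar>fst p\<bar> + \<bar>snd p\<bar>) ^ 3)"
    proof (intro exI conjI)
      show "(\<lambda>p. z p - (A / a * a * (fst p)\<^sup>2 + Cc / b * b * (snd p)\<^sup>2) / 2)
                \<in> O[at (0, 0)](\<lambda>p. (\<bar>fst p\<bar> + \<bar>snd p\<bar>) ^ 3)"
        by (rule EE_bigo[OF EE_cong[OF ez]]) (use assms(4,5) B0 in \<open>simp add: field_simps\<close>)
    qed (use s in auto)
  next
    assume ab: "a = b"
    show "\<exists>\<xi> s1 s2 :: real. s1 \<in> {-1, 1} \<and> s2 \<in> {-1, 1} \<and>
              (\<lambda>p. z (fst p * cos \<xi> + snd p * sin \<xi>, - fst p * sin \<xi> + snd p * cos \<xi>)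
                     - (s1 * a * (fst p)\<^sup>2 + s2 * b * (snd p)\<^sup>2) / 2)
                \<in> O[at (0, 0)](\<lambda>p. (\<bar>fst p\<bar> + \<bar>snd p\<bar>) ^ 3)"
    proof (cases "B = 0")
      case True
      have "A\<^sup>2 = a\<^sup>2" "Cc\<^sup>2 = b\<^sup>2" using co True by auto
      then have s: "A / a \<in> {-1, 1}" "Cc / b \<in> {-1, 1}" using assms(4,5)
        by (auto simp: power2_eq_iff)
      show ?thesis
      proof (intro exI conjI)
        show "(\<lambda>p. z (fst p * cos 0 + snd p * sin 0, - fst p * sin 0 + snd p * cos 0)
                     - (A / a * a * (fst p)\<^sup>2 + Cc / b * b * (snd p)\<^sup>2) / 2)
                \<in> O[at (0, 0)](\<lambda>p. (\<bar>fst p\<bar> + \<bar>snd p\<bar>) ^ 3)"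
          by (rule EE_bigo[OF EE_cong[OF ez]]) (use assms(4,5) True in \<open>simp add: field_simps\<close>)
      qed (use s in auto)
    next
      case False
      have CA: "Cc = - A" using co(2) False CA by blast
      have "(A / a)\<^sup>2 + (B / a)\<^sup>2 = 1" using co(1) assms(4) by (simp add: power_divide field_simps)
      then obtain \<phi> where phi: "A / a = cos \<phi>" "B / a = sin \<phi>" by (rule sincos_total_2pi) blast
      define \<xi> where "\<xi> = - \<phi> / 2"
      have phx: "\<phi> = - (2 * \<xi>)" by (simp add: \<xi>_def)
      have cphi: "cos \<phi> = (cos \<xi>)\<^sup>2 - (sin \<xi>)\<^sup>2" unfolding phx by (simp only: cos_minus cos_double)
      have sphi: "sin \<phi> = - (2 * sin \<xi> * cos \<xi>)" unfolding phx by (simp only: sin_minus sin_double)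
      have "A = a * cos \<phi>" "B = a * sin \<phi>" using phi assms(4) by (simp_all add: divide_eq_eq)
      then have Aeq: "A = a * ((cos \<xi>)\<^sup>2 - (sin \<xi>)\<^sup>2)" and Beq: "B = - 2 * a * sin \<xi> * cos \<xi>"
        unfolding cphi sphi by simp_all
      have one: "(cos \<xi>)\<^sup>2 + (sin \<xi>)\<^sup>2 = 1" by simp
      have er: "EE 3 (\<lambda>p. (\<lambda>q. z q - (A/2 * (fst q)\<^sup>2 + B * fst q * snd q + Cc/2 * (snd q)\<^sup>2))
                  (fst p * cos \<xi> + snd p * sin \<xi>, - fst p * sin \<xi> + snd p * cos \<xi>))"
        by (rule EE_rot[OF ez]) auto
      show ?thesis
      proof (intro exI conjI)
        show "(\<lambda>p. z (fst p * cos \<xi> + snd p * sin \<xi>, - fst p * sin \<xi> + snd p * cos \<xi>)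
                     - (1 * a * (fst p)\<^sup>2 + (-1) * b * (snd p)\<^sup>2) / 2)
                \<in> O[at (0, 0)](\<lambda>p. (\<bar>fst p\<bar> + \<bar>snd p\<bar>) ^ 3)"
        proof (rule EE_bigo[OF EE_cong[OF er]])
          fix p :: "real \<times> real"
          obtain u v where p: "p = (u,v)" by (cases p)
          have ident: "A/2 * (u * cos \<xi> + v * sin \<xi>)\<^sup>2 + B * (u * cos \<xi> + v * sin \<xi>) * (- u * sin \<xi> + v * cos \<xi>)
              + Cc/2 * (- u * sin \<xi> + v * cos \<xi>)\<^sup>2 = a * (u\<^sup>2 - v\<^sup>2) * ((cos \<xi>)\<^sup>2 + (sin \<xi>)\<^sup>2)\<^sup>2 / 2"
            unfolding CA Aeq Beq by (rule rot_identity)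
          have P: "A/2 * (u * cos \<xi> + v * sin \<xi>)\<^sup>2 + B * (u * cos \<xi> + v * sin \<xi>) * (- u * sin \<xi> + v * cos \<xi>)
              + Cc/2 * (- u * sin \<xi> + v * cos \<xi>)\<^sup>2 = (1 * a * u\<^sup>2 + (-1) * b * v\<^sup>2) / 2"
            unfolding ident one using ab by (simp add: algebra_simps)
          show "(\<lambda>q. z q - (A/2 * (fst q)\<^sup>2 + B * fst q * snd q + Cc/2 * (snd q)\<^sup>2))
                  (fst p * cos \<xi> + snd p * sin \<xi>, - fst p * sin \<xi> + snd p * cos \<xi>) =
                z (fst p * cos \<xi> + snd p * sin \<xi>, - fst p * sin \<xi> + snd p * cos \<xi>)
                     - (1 * a * (fst p)\<^sup>2 + (-1) * b * (snd p)\<^sup>2) / 2"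
            unfolding p fst_conv snd_conv P[symmetric] by (rule refl)
        qed
      qed auto
    qed
  qed
qed

end
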